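(* Let $\Sigma$ be a finite alphabet, $\mathcal F\subseteq\Sigma^{\Sigma^*}$ and $T\in\mathbb N_+$, and let $\mathcal L(\mathcal F^{\mathrm{CoT}(T)})$ be the associated CoT loss class. If $\Sigma=\{0,1\}$, then $$\mathrm{VCdim}(\mathcal L(\mathcal F^{\mathrm{CoT}(T)}))\le3\,\mathrm{VCdim}(\mathcal F)\log_2\!\left(\frac{2T}{\ln2}\right).$$ For any non-binary finite $\Sigma$, $$\mathrm{VCdim}(\mathcal L(\mathcal F^{\mathrm{CoT}(T)}))\le3\,\mathrm{Ndim}(\mathcal F)\log_2\!\left(\frac{2\,\mathrm{Ndim}(\mathcal F)\,|\Sigma|^2\,T}{e\ln2}\right).$$
   Context: For $f:\Sigma^*\to\Sigma$, $\bar f(\mathbf x)$ is $\mathbf x$ with $f(\mathbf x)$ appended and $f^{\mathrm{CoT}(T)}=\bar f^{\circ T}$. The loss class $\mathcal L(\mathcal F^{\mathrm{CoT}(T)})=\{\ell_f:f\in\mathcal F\}$ consists of the $\{0,1\}$-valued functions on strings $\mathbf z$ (of length at least $T$) given by $\ell_f(\mathbf z)=\mathbf 1[\mathbf z\ne f^{\mathrm{CoT}(T)}(\mathbf x)]$, where $\mathbf x$ is $\mathbf z$ with its last $T$ tokens removed. $\mathrm{VCdim}$ is VC dimension. Natarajan dimension $\mathrm{Ndim}(\mathcal H)$: the largest size of a set $S$ for which there are $h_0,h_1$ with $h_0(\mathbf x)\ne h_1(\mathbf x)$ on $S$ such that for every $U\subseteq S$ some $h\in\mathcal H$ agrees with $h_0$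 on $U$ and with $h_1$ on $S\setminus U$. *)

theory Defs
  imports Complex_Main "HOL-Library.Extended_Nat" "HOL-Library.Cardinality"
begin

definition cot_step :: "('a list \<Rightarrow> 'a) \<Rightarrow> 'a list \<Rightarrow> 'a list" where
  "cot_step f x = x @ [f x]"

definition cot :: "('a list \<Rightarrow> 'a) \<Rightarrow> nat \<Rightarrow> 'a list \<Rightarrow> 'a list" where
  "cot f T = (cot_step f ^^ T)"

text \<open>Loss function: true (=1) iff z differs from the CoT output on z with last T tokens removed.
  Meaningful on strings of length at least T (the domain used below).\<close>
definition loss :: "('a list \<Rightarrow> 'a) \<Rightarrow> nat \<Rightarrow> 'a list \<Rightarrow> bool" where
  "loss f T z = (z \<noteq> cot f T (take (length z - T) z))"

definition loss_class :: "('a list \<Rightarrow> 'a) set \<Rightarrow> nat \<Rightarrow> ('a list \<Rightarrow> bool) set" where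
  "loss_class F T = (\<lambda>f. loss f T) ` F"

definition shatters :: "('x \<Rightarrow> bool) set \<Rightarrow> 'x set \<Rightarrow> bool" where
  "shatters H S = (\<forall>U\<subseteq>S. \<exists>h\<in>H. \<forall>x\<in>S. h x = (x \<in> U))"

definition VCdim_on :: "'x set \<Rightarrow> ('x \<Rightarrow> bool) set \<Rightarrow> enat" where
  "VCdim_on D H = Sup {enat (card S) | S. finite S \<and> S \<subseteq> D \<and> shatters H S}"

abbreviation VCdim :: "('x \<Rightarrow> bool) set \<Rightarrow> enat" where
  "VCdim H \<equiv> VCdim_on UNIV H"

definition N_shatters :: "('x \<Rightarrow> 'y) set \<Rightarrow> 'x set \<Rightarrow> bool" where
  "N_shatters H S = (\<exists>h0 h1. (\<forall>x\<in>S. h0 x \<noteq> h1 x) \<and>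
      (\<forall>U\<subseteq>S. \<exists>h\<in>H. (\<forall>x\<in>U. h x = h0 x) \<and> (\<forall>x\<in>S - U. h x = h1 x)))"

definition Ndim :: "('x \<Rightarrow> 'y) set \<Rightarrow> enat" where
  "Ndim H = Sup {enat (card S) | S. finite S \<and> N_shatters H S}"

end

theory Submission
  imports Defs "HOL-Library.FuncSet"
begin

definition Phi :: "nat \<Rightarrow> nat \<Rightarrow> nat \<Rightarrow> nat" where
  "Phi q n d = (\<Sum>i\<le>d. (n choose i) * q^i)"

lemma Phi_0d: "Phi q 0 d = 1"
  unfolding Phi_def by (induction d) auto

lemma Phi_n0: "Phi q n 0 = 1"
  unfolding Phi_def by simp

lemma Phi_rec: "Phi q (Suc n) (Suc d) = Phi q n (Suc d) + q * Phi q n d"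
proof -
  have "Phi q (Suc n) (Suc d) = 1 + (\<Sum>i\<le>d. (Suc n choose Suc i) * q^Suc i)"
    unfolding Phi_def by (subst sum.atMost_Suc_shift) simp
  also have "\<dots> = 1 + (\<Sum>i\<le>d. (n choose Suc i) * q^Suc i) + (\<Sum>i\<le>d. (n choose i) * q^Suc i)"
    by (simp add: sum.distrib algebra_simps)
  also have "(\<Sum>i\<le>d. (n choose i) * q^Suc i) = q * Phi q n d"
    unfolding Phi_def by (simp add: sum_distrib_left algebra_simps)
  also have "1 + (\<Sum>i\<le>d. (n choose Suc i) * q^Suc i) = Phi q n (Suc d)"
    unfolding Phi_def by (simp only: sum.atMost_Suc_shift) simp
  finally show ?thesis .
qed

lemma Phi_mono_step: "Phi q n d \<le> Phi q (Suc n) d"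
  by (cases d) (simp_all add: Phi_n0 Phi_rec)

lemma Phi_mono: "n \<le> n' \<Longrightarrow> Phi q n d \<le> Phi q n' d"
  by (induction n' rule: dec_induct) (auto intro: le_trans Phi_mono_step)

lemma Phi_q0: "Phi 0 n d = 1"
  unfolding Phi_def by (induction d) auto

lemma Phi_real_bound:
  assumes "1 \<le> d" "d \<le> n" "1 \<le> q"
  shows "real (Phi q n d) \<le> real q ^ d * (exp 1 * real n / real d) ^ d"
proof -
  have n0: "real n > 0" using assms by simp
  define r where "r = real d / real n"
  have r0: "0 < r" "r \<le> 1" using assms n0 by (auto simp: r_def)
  have A: "real (Phi q n d) \<le> real q ^ d * (\<Sum>i\<le>d. real (n choose i))"
  proof -
    have "real (Phi q n d) = (\<Sum>i\<le>d. real (n choose i) * real q ^ i)"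
      unfolding Phi_def by simp
    also have "\<dots> \<le> (\<Sum>i\<le>d. real (n choose i) * real q ^ d)"
      by (intro sum_mono mult_left_mono power_increasing) (use assms in auto)
    also have "\<dots> = real q ^ d * (\<Sum>i\<le>d. real (n choose i))"
      by (simp add: sum_distrib_left algebra_simps)
    finally show ?thesis .
  qed
  have "(\<Sum>i\<le>d. real (n choose i)) \<le> (\<Sum>i\<le>d. real (n choose i) * (r ^ i / r ^ d))"
  proof (intro sum_mono)
    fix i assume "i \<in> {..d}"
    then have "r ^ d \<le> r ^ i" using r0 by (intro power_decreasing) auto
    then have "1 \<le> r ^ i / r ^ d" using r0 by simp
    then show "real (n choose i) \<le> real (n choose i) * (r ^ i / r ^ d)"
      using mult_left_mono[of 1 "r ^ i / r ^ d" "real (n choose i)"] by simp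
  qed
  also have "\<dots> = (\<Sum>i\<le>d. real (n choose i) * r ^ i) / r ^ d"
    by (simp add: sum_divide_distrib)
  also have "\<dots> \<le> (\<Sum>i\<le>n. real (n choose i) * r ^ i) / r ^ d"
    by (intro divide_right_mono sum_mono2) (use assms r0 in auto)
  also have "(\<Sum>i\<le>n. real (n choose i) * r ^ i) = (r + 1) ^ n"
    by (simp add: binomial_ring)
  also have "(r + 1) ^ n / r ^ d \<le> exp r ^ n / r ^ d"
    by (intro divide_right_mono power_mono) (use r0 in \<open>auto simp: add.commute\<close>)
  also have "exp r ^ n = exp 1 ^ d"
    using n0 by (simp add: r_def flip: exp_of_nat_mult)
  also have "exp 1 ^ d / r ^ d = (exp 1 * real n / real d) ^ d"
    using assms by (simp add: r_def power_divide power_mult_distrib)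
  finally have B: "(\<Sum>i\<le>d. real (n choose i)) \<le> (exp 1 * real n / real d) ^ d" .
  show ?thesis
    using A mult_left_mono[OF B, of "real q ^ d"] by simp
qed

lemma finite_restr_img:
  fixes H :: "('x \<Rightarrow> 'y::finite) set"
  assumes "finite S"
  shows "finite ((\<lambda>h. restrict h S) ` H)"
  by (rule finite_subset[OF _ finite_PiE[OF assms, of "\<lambda>_. UNIV"]]) auto

lemma card_pairs_bound:
  fixes E :: "'y set"
  assumes Pd: "\<And>a b. (a,b)\<in>P \<Longrightarrow> a \<noteq> b"
    and Pt: "\<And>a b. a \<noteq> b \<Longrightarrow> (a,b)\<in>P \<or> (b,a)\<in>P"
    and fin: "finite E"
  shows "card E \<le> 1 + card (P \<inter> E \<times> E)"
proof (cases "E = {}")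
  case True then show ?thesis by simp
next
  case False
  then obtain a0 where a0: "a0 \<in> E" by auto
  define psi where "psi b = (if (a0,b)\<in>P then (a0,b) else (b,a0))" for b
  have "inj_on psi (E - {a0})"
  proof (rule inj_onI)
    fix b1 b2 assume b: "b1 \<in> E - {a0}" "b2 \<in> E - {a0}" "psi b1 = psi b2"
    show "b1 = b2"
    proof (cases "(a0,b1) \<in> P"; cases "(a0,b2) \<in> P")
    qed (use b in \<open>simp_all add: psi_def\<close>)
  qed
  moreover have "psi ` (E - {a0}) \<subseteq> P \<inter> E \<times> E"
    using a0 Pt unfolding psi_def by auto
  moreover have "finite (P \<inter> E \<times> E)"
    by (rule finite_subset[of _ "E \<times> E"]) (use fin in auto)
  ultimately have c: "card (E - {a0}) \<le> card (P \<inter> E \<times> E)"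
    by (rule card_inj_on_le)
  have "card E = Suc (card (E - {a0}))"
    using card.remove[OF fin a0] .
  with c show ?thesis by linarith
qed

lemma N_shatters_ext:
  fixes H :: "('x \<Rightarrow> 'y) set"
  assumes sh: "N_shatters {h\<in>H. \<exists>h'\<in>H. restrict h' S = restrict h S \<and> h x = a \<and> h' x = b} T"
    and xT: "x \<notin> T" and TS: "T \<subseteq> S" and ab: "a \<noteq> b"
  shows "N_shatters H (insert x T)"
proof -
  let ?Hp = "{h\<in>H. \<exists>h'\<in>H. restrict h' S = restrict h S \<and> h x = a \<and> h' x = b}"
  obtain h0 h1 where d: "\<forall>y\<in>T. h0 y \<noteq> h1 y"
    and r: "\<forall>U\<subseteq>T. \<exists>h\<in>?Hp. (\<forall>y\<in>U. h y = h0 y) \<and> (\<forall>y\<in>T - U. h y = h1 y)"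
    using sh unfolding N_shatters_def by blast
  have D: "\<forall>y\<in>insert x T. (h0(x := a)) y \<noteq> (h1(x := b)) y"
    using d ab xT by auto
  have "\<exists>h\<in>H. (\<forall>y\<in>U. h y = (h0(x := a)) y) \<and> (\<forall>y\<in>insert x T - U. h y = (h1(x := b)) y)"
    if U: "U \<subseteq> insert x T" for U
  proof -
    show "\<exists>h\<in>H. (\<forall>y\<in>U. h y = (h0(x := a)) y) \<and> (\<forall>y\<in>insert x T - U. h y = (h1(x := b)) y)"
    proof (cases "x \<in> U")
      case True
      have "U - {x} \<subseteq> T" using U by auto
      then obtain h where h: "h \<in> ?Hp" "\<forall>y\<in>U - {x}. h y = h0 y" "\<forall>y\<in>T - (U - {x}). h y = h1 y"
        using r by blast
      have hH: "h \<in> H" "h x = a" using h(1) by auto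
      have A1: "\<forall>y\<in>U. h y = (h0(x := a)) y"
      proof
        fix y assume "y \<in> U"
        show "h y = (h0(x := a)) y"
        proof (cases "y = x")
          case True then show ?thesis using hH by simp
        next
          case False then show ?thesis using h(2) \<open>y \<in> U\<close> by simp
        qed
      qed
      have A2: "\<forall>y\<in>insert x T - U. h y = (h1(x := b)) y"
      proof
        fix y assume y: "y \<in> insert x T - U"
        then have "y \<noteq> x" "y \<in> T - (U - {x})" using True by auto
        then show "h y = (h1(x := b)) y" using h(3) by simp
      qed
      show ?thesis using hH A1 A2 by blast
    next
      case False
      have "U \<subseteq> T" using U False by auto
      then obtain h where h: "h \<in> ?Hp" "\<forall>y\<in>U. h y = h0 y" "\<forall>y\<in>T - U. h y = h1 y"
        using r by blast
      then obtain h' where h': "h' \<in> H" "restrict h' S = restrict h S" "h' x = b" by auto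
      have eq: "\<forall>y\<in>S. h' y = h y" using h'(2) by (metis restrict_apply')
      have A1: "\<forall>y\<in>U. h' y = (h0(x := a)) y"
      proof
        fix y assume y: "y \<in> U"
        then have "y \<noteq> x" "y \<in> S" using False \<open>U \<subseteq> T\<close> TS by auto
        then show "h' y = (h0(x := a)) y" using h(2) eq y by simp
      qed
      have A2: "\<forall>y\<in>insert x T - U. h' y = (h1(x := b)) y"
      proof
        fix y assume y: "y \<in> insert x T - U"
        show "h' y = (h1(x := b)) y"
        proof (cases "y = x")
          case True then show ?thesis using h'(3) by simp
        next
          case False
          then have "y \<in> T - U" "y \<in> S" using y TS by auto
          then show ?thesis using h(3) eq False by simp
        qed
      qed
      show ?thesis using h'(1) A1 A2 by blast
    qed
  qed
  then show ?thesis using D unfolding N_shatters_def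
    by (intro exI[of _ "h0(x:=a)"] exI[of _ "h1(x:=b)"] conjI) simp_all
qed

lemma natarajan:
  fixes H :: "('x \<Rightarrow> 'y::finite) set" and P :: "('y \<times> 'y) set"
  assumes Pd: "\<And>a b. (a,b)\<in>P \<Longrightarrow> a \<noteq> b"
    and Pt: "\<And>a b. a \<noteq> b \<Longrightarrow> (a,b)\<in>P \<or> (b,a)\<in>P"
    and fin: "finite S"
  shows "(\<forall>T\<subseteq>S. N_shatters H T \<longrightarrow> card T \<le> d) \<Longrightarrow>
     card ((\<lambda>h. restrict h S) ` H) \<le> Phi (card P) (card S) d"
  using fin
proof (induction S arbitrary: H d rule: finite_induct)
  case empty
  have r: "restrict h {} = (\<lambda>_. undefined)" for h :: "'x \<Rightarrow> 'y"
    by (simp add: restrict_def)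
  have "(\<lambda>h. restrict h {}) ` H \<subseteq> {\<lambda>_::'x. undefined::'y}" by (auto simp: r)
  then have "card ((\<lambda>h. restrict h {}) ` H) \<le> card {\<lambda>_::'x. undefined::'y}"
    by (intro card_mono) auto
  then show ?case by (simp add: Phi_0d r)
next
  case (insert x S)
  define q where "q = card P"
  let ?R = "\<lambda>h. restrict h S"
  let ?R' = "\<lambda>h. restrict h (insert x S)"
  define G where "G = ?R ` H"
  define E where "E g = {y. \<exists>h\<in>H. ?R h = g \<and> h x = y}" for g
  define Hp where "Hp p = {h\<in>H. \<exists>h'\<in>H. ?R h' = ?R h \<and> h x = fst p \<and> h' x = snd p}" for p
  have finG: "finite G" unfolding G_def by (rule finite_restr_img[OF insert(1)])
  have finE: "finite (E g)" for g by simp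
  have finP: "finite P" by simp
  define phi where "phi r = (restrict r S, r x)" for r :: "'x \<Rightarrow> 'y"
  have phiR: "phi (?R' h) = (?R h, h x)" for h
    unfolding phi_def by (simp add: fun_eq_iff restrict_def)
  have "inj_on phi (?R' ` H)"
  proof (rule inj_onI)
    fix r1 r2 assume r: "r1 \<in> ?R' ` H" "r2 \<in> ?R' ` H" "phi r1 = phi r2"
    then have e: "restrict r1 S = restrict r2 S" "r1 x = r2 x" by (auto simp: phi_def)
    show "r1 = r2"
    proof (rule ext)
      fix z
      have "restrict r1 S z = restrict r2 S z" using e by simp
      then show "r1 z = r2 z" using r(1,2) e(2)
        by (cases "z \<in> S"; cases "z = x") (auto simp: restrict_def)
    qed
  qed
  then have c1: "card (?R' ` H) = card (phi ` ?R' ` H)" by (simp add: card_image)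
  have "phi ` ?R' ` H = (\<lambda>h. (?R h, h x)) ` H"
    by (simp add: image_image phiR)
  also have "\<dots> = Sigma G E"
    unfolding G_def E_def by (auto simp: image_iff) (metis (mono_tags, lifting))
  finally have "phi ` ?R' ` H = Sigma G E" .
  then have c2: "card (?R' ` H) = (\<Sum>g\<in>G. card (E g))"
    using c1 finG by simp
  have c3: "(\<Sum>g\<in>G. card (E g)) \<le> (\<Sum>g\<in>G. 1 + card (P \<inter> E g \<times> E g))"
    by (intro sum_mono card_pairs_bound[OF Pd Pt finE]) auto
  have c4: "(\<Sum>g\<in>G. card (P \<inter> E g \<times> E g)) = (\<Sum>p\<in>P. card {g\<in>G. p \<in> E g \<times> E g})"
  proof -
    have "(\<Sum>g\<in>G. card (P \<inter> E g \<times> E g)) = (\<Sum>g\<in>G. \<Sum>p\<in>P. if p \<in> E g \<times> E g then 1 else 0)"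
    proof (intro sum.cong refl)
      fix g
      have "P \<inter> E g \<times> E g = {p\<in>P. p \<in> E g \<times> E g}" by auto
      then show "card (P \<inter> E g \<times> E g) = (\<Sum>p\<in>P. if p \<in> E g \<times> E g then 1 else 0)"
        using sum.inter_filter[OF finP, of "\<lambda>_. 1::nat"] by simp
    qed
    also have "\<dots> = (\<Sum>p\<in>P. \<Sum>g\<in>G. if p \<in> E g \<times> E g then 1 else 0)"
      by (rule sum.swap)
    also have "\<dots> = (\<Sum>p\<in>P. card {g\<in>G. p \<in> E g \<times> E g})"
      using sum.inter_filter[OF finG, of "\<lambda>_. 1::nat"] by simp
    finally show ?thesis .
  qed
  have c5: "{g\<in>G. p \<in> E g \<times> E g} = ?R ` Hp p" for p
  proof -
    obtain a b where p: "p = (a,b)" by force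
    show ?thesis
    proof
      show "{g\<in>G. p \<in> E g \<times> E g} \<subseteq> ?R ` Hp p"
      proof
        fix g assume "g \<in> {g\<in>G. p \<in> E g \<times> E g}"
        then obtain h1 h2 where "h1 \<in> H" "?R h1 = g" "h1 x = a" "h2 \<in> H" "?R h2 = g" "h2 x = b"
          unfolding E_def p by auto
        then have "h1 \<in> Hp p" unfolding Hp_def p by auto
        then show "g \<in> ?R ` Hp p" using \<open>?R h1 = g\<close> by blast
      qed
    next
      show "?R ` Hp p \<subseteq> {g\<in>G. p \<in> E g \<times> E g}"
        unfolding G_def E_def Hp_def p by fastforce
    qed
  qed
  have IH1: "card G \<le> Phi q (card S) d"
    unfolding G_def q_def using insert.prems by (intro insert.IH) auto
  have shp: "\<forall>T\<subseteq>S. N_shatters (Hp p) T \<longrightarrow> card T + 1 \<le> d" if "p \<in> P" for p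
  proof (intro allI impI)
    fix T assume T: "T \<subseteq> S" "N_shatters (Hp p) T"
    obtain a b where p: "p = (a,b)" by force
    have "a \<noteq> b" using Pd that p by auto
    have "N_shatters H (insert x T)"
      using N_shatters_ext[of H S x a b T] T \<open>a \<noteq> b\<close> insert(2) unfolding Hp_def p by auto
    moreover have "insert x T \<subseteq> insert x S" using T by auto
    moreover have "finite T" using T insert(1) finite_subset by auto
    ultimately show "card T + 1 \<le> d" using insert.prems insert(2) T
      by (metis Suc_eq_plus1 card_insert_disjoint subsetD)
  qed
  have c6a: "card (?R ` Hp p) \<le> Phi q (card S) (d - 1)" and c6b: "d = 0 \<Longrightarrow> Hp p = {}"
    if p: "p \<in> P" for p
  proof -
    show "d = 0 \<Longrightarrow> Hp p = {}"
    proof (rule ccontr)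
      assume "d = 0" "Hp p \<noteq> {}"
      then have "N_shatters (Hp p) {}" unfolding N_shatters_def by auto
      then show False using shp[OF p] \<open>d = 0\<close> by auto
    qed
    show "card (?R ` Hp p) \<le> Phi q (card S) (d - 1)"
    proof (cases "Hp p = {}")
      case True then show ?thesis by simp
    next
      case False
      then have "N_shatters (Hp p) {}" unfolding N_shatters_def by auto
      then have "1 \<le> d" using shp[OF p] by auto
      then show ?thesis
        unfolding q_def using shp[OF p] by (intro insert.IH) auto
    qed
  qed
  have c6: "(\<Sum>p\<in>P. card (?R ` Hp p)) \<le> (if d = 0 then 0 else q * Phi q (card S) (d - 1))"
  proof (cases "d = 0")
    case True then show ?thesis using c6b by simp
  next
    case False
    have "(\<Sum>p\<in>P. card (?R ` Hp p)) \<le> (\<Sum>p\<in>P. Phi q (card S) (d - 1))"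
      by (intro sum_mono c6a)
    then show ?thesis using False by (simp add: q_def)
  qed
  have "card (?R' ` H) \<le> card G + (\<Sum>p\<in>P. card (?R ` Hp p))"
    using c2 c3 c4 c5 by (simp add: sum_Suc)
  also have "\<dots> \<le> Phi q (card S) d + (if d = 0 then 0 else q * Phi q (card S) (d - 1))"
    using IH1 c6 by simp
  also have "\<dots> \<le> Phi q (card (insert x S)) d"
  proof (cases d)
    case 0
    then show ?thesis by (simp add: Phi_n0)
  next
    case (Suc d')
    then show ?thesis using insert(1,2) by (simp add: Phi_rec)
  qed
  finally show ?case unfolding q_def .
qed

lemma cot_0: "cot f 0 x = x"
  by (simp add: cot_def)

lemma cot_Suc: "cot f (Suc n) x = cot f n x @ [f (cot f n x)]"
  by (simp add: cot_def cot_step_def)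

lemma length_cot: "length (cot f n x) = length x + n"
  by (induction n) (simp_all add: cot_0 cot_Suc)

lemma cot_eq_iff:
  "(x @ ys = cot f (length ys) x) \<longleftrightarrow> (\<forall>j<length ys. f (x @ take j ys) = ys ! j)"
proof (induction ys rule: rev_induct)
  case Nil
  then show ?case by (simp add: cot_0)
next
  case (snoc y ys)
  have "(x @ ys @ [y] = cot f (length (ys @ [y])) x) \<longleftrightarrow>
        (x @ ys = cot f (length ys) x \<and> y = f (cot f (length ys) x))"
    by (simp add: cot_Suc)
  also have "\<dots> \<longleftrightarrow> (\<forall>j<length ys. f (x @ take j ys) = ys ! j) \<and> y = f (x @ ys)"
    using snoc.IH by metis
  also have "\<dots> \<longleftrightarrow> (\<forall>j<length (ys @ [y]). f (x @ take j (ys @ [y])) = (ys @ [y]) ! j)"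
  proof -
    have "(\<forall>j<length (ys @ [y]). f (x @ take j (ys @ [y])) = (ys @ [y]) ! j) \<longleftrightarrow>
          (\<forall>j<length ys. f (x @ take j (ys @ [y])) = (ys @ [y]) ! j) \<and>
          f (x @ take (length ys) (ys @ [y])) = (ys @ [y]) ! length ys"
      by (auto simp: less_Suc_eq)
    also have "\<dots> \<longleftrightarrow> (\<forall>j<length ys. f (x @ take j ys) = ys ! j) \<and> f (x @ ys) = y"
      by (auto simp: nth_append)
    finally show ?thesis by auto
  qed
  finally show ?case by simp
qed

definition pre :: "nat \<Rightarrow> 'a list \<Rightarrow> nat \<Rightarrow> 'a list" where
  "pre T z j = take (length z - T + j) z"

lemma loss_iff:
  assumes "T \<le> length z"
  shows "loss f T z \<longleftrightarrow> \<not> (\<forall>j<T. f (pre T z j) = z ! (length z - T + j))"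
proof -
  define x where "x = take (length z - T) z"
  define ys where "ys = drop (length z - T) z"
  have z: "z = x @ ys" unfolding x_def ys_def by simp
  have ly: "length ys = T" unfolding ys_def using assms by simp
  have "loss f T z \<longleftrightarrow> \<not> (x @ ys = cot f (length ys) x)"
    unfolding loss_def ly using z x_def by simp
  also have "\<dots> \<longleftrightarrow> \<not> (\<forall>j<T. f (x @ take j ys) = ys ! j)"
    using cot_eq_iff[of x ys f] ly by simp
  also have "(\<forall>j<T. f (x @ take j ys) = ys ! j) \<longleftrightarrow> (\<forall>j<T. f (pre T z j) = z ! (length z - T + j))"
  proof -
    have "x @ take j ys = pre T z j" for j
      unfolding x_def ys_def pre_def by (simp add: take_add)
    moreover have "ys ! j = z ! (length z - T + j)" if "j < T" for j
      unfolding ys_def using that assms by simp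
    ultimately show ?thesis by auto
  qed
  finally show ?thesis .
qed

lemma loss_cong:
  assumes "T \<le> length z" "\<And>j. j < T \<Longrightarrow> f (pre T z j) = g (pre T z j)"
  shows "loss f T z = loss g T z"
  using loss_iff[OF assms(1), of f] loss_iff[OF assms(1), of g] assms(2) by auto

lemma shatter_count:
  fixes F :: "('a::finite list \<Rightarrow> 'a) set" and P :: "('a \<times> 'a) set"
  assumes Pd: "\<And>a b. (a,b)\<in>P \<Longrightarrow> a \<noteq> b"
    and Pt: "\<And>a b. a \<noteq> b \<Longrightarrow> (a,b)\<in>P \<or> (b,a)\<in>P"
    and hyp: "\<And>S. finite S \<Longrightarrow> N_shatters F S \<Longrightarrow> card S \<le> d"
    and Zf: "finite Z" and ZD: "Z \<subseteq> {z. T \<le> length z}"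
    and Zs: "shatters (loss_class F T) Z"
  shows "2 ^ card Z \<le> Phi (card P) (card Z * T) d"
proof -
  define S where "S = (\<Union>z\<in>Z. pre T z ` {..<T})"
  have Sf: "finite S" unfolding S_def using Zf by auto
  have "card S \<le> (\<Sum>z\<in>Z. card (pre T z ` {..<T}))"
    unfolding S_def by (rule card_UN_le[OF Zf])
  also have "\<dots> \<le> card Z * T"
  proof -
    have c: "card (pre T z ` {..<T}) \<le> T" for z :: "'a list"
      using card_image_le[of "{..<T}" "pre T z"] by simp
    have "(\<Sum>z\<in>Z. card (pre T z ` {..<T})) \<le> (\<Sum>z\<in>Z. T)"
      by (rule sum_mono) (rule c)
    then show ?thesis by simp
  qed
  finally have cS: "card S \<le> card Z * T" .
  have ex: "\<exists>f\<in>F. \<forall>z\<in>Z. loss f T z = (z \<in> U)" if "U \<subseteq> Z" for U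
  proof -
    have "\<forall>U\<subseteq>Z. \<exists>h\<in>loss_class F T. \<forall>z\<in>Z. h z = (z \<in> U)"
      using Zs unfolding shatters_def .
    then have "\<exists>h\<in>loss_class F T. \<forall>z\<in>Z. h z = (z \<in> U)" using that by simp
    then obtain h where h: "h \<in> loss_class F T" "\<forall>z\<in>Z. h z = (z \<in> U)"
      by (elim bexE) simp
    then obtain f where "f \<in> F" "h = loss f T" unfolding loss_class_def by auto
    then show ?thesis using h by auto
  qed
  define ch where "ch U = (SOME f. f \<in> F \<and> (\<forall>z\<in>Z. loss f T z = (z \<in> U)))" for U
  have ch0: "ch U \<in> F \<and> (\<forall>z\<in>Z. loss (ch U) T z = (z \<in> U))" if "U \<subseteq> Z" for U
    unfolding ch_def by (rule someI_ex[OF ex[OF that, unfolded Bex_def]])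
  have ch: "ch U \<in> F" "\<forall>z\<in>Z. loss (ch U) T z = (z \<in> U)" if "U \<subseteq> Z" for U
    using ch0[OF that] by blast+
  have inj: "inj_on (\<lambda>U. restrict (ch U) S) (Pow Z)"
  proof (rule inj_onI)
    fix U1 U2 assume U: "U1 \<in> Pow Z" "U2 \<in> Pow Z" "restrict (ch U1) S = restrict (ch U2) S"
    have "z \<in> U1 \<longleftrightarrow> z \<in> U2" if z: "z \<in> Z" for z
    proof -
      have "ch U1 (pre T z j) = ch U2 (pre T z j)" if "j < T" for j
      proof -
        have "pre T z j \<in> S" unfolding S_def using z that by auto
        then show ?thesis using U(3) by (metis restrict_apply')
      qed
      then have "loss (ch U1) T z = loss (ch U2) T z"
        using ZD z by (intro loss_cong) auto
      then show ?thesis using ch(2)[of U1] ch(2)[of U2] U z by auto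
    qed
    then show "U1 = U2" using U(1,2) by auto
  qed
  have sub: "(\<lambda>U. restrict (ch U) S) ` Pow Z \<subseteq> (\<lambda>h. restrict h S) ` F"
    using ch(1) by auto
  have "2 ^ card Z = card (Pow Z)" using Zf by (simp add: card_Pow)
  also have "\<dots> \<le> card ((\<lambda>h. restrict h S) ` F)"
    using card_inj_on_le[OF inj sub finite_restr_img[OF Sf]] .
  also have "\<dots> \<le> Phi (card P) (card S) d"
  proof (rule natarajan[OF Pd Pt Sf])
    show "\<forall>T\<subseteq>S. N_shatters F T \<longrightarrow> card T \<le> d"
      using hyp Sf finite_subset by blast
  qed
  also have "\<dots> \<le> Phi (card P) (card Z * T) d"
    by (rule Phi_mono[OF cS])
  finally show ?thesis .
qed

lemma arith_main:
  fixes m d T q :: nat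
  assumes h: "2 ^ m \<le> Phi q (m * T) d" and q: "1 \<le> q" and T: "1 \<le> T" and d: "1 \<le> d" and md: "d < m"
  shows "real m \<le> 2 * real d * log 2 (2 * real q * real T / ln 2)"
proof -
  have dn: "d \<le> m * T" using md T by (metis le_trans less_imp_le mult.right_neutral mult_le_mono2)
  have "(2::real) ^ m \<le> real (Phi q (m * T) d)"
    using h by (metis numeral_power_le_of_nat_cancel_iff)
  also have "\<dots> \<le> real q ^ d * (exp 1 * real (m * T) / real d) ^ d"
    by (rule Phi_real_bound[OF d dn q])
  also have "\<dots> = (real q * exp 1 * real m * real T / real d) ^ d"
    by (simp add: power_mult_distrib[symmetric] algebra_simps)
  finally have h2: "(2::real) ^ m \<le> (real q * exp 1 * real m * real T / real d) ^ d" .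
  define c where "c = real q * exp 1 * real m * real T / real d"
  have l2: "0 < ln (2::real)" by simp
  have ln2: "ln 2 < (1::real)" by (rule ln_2_less_1)
  have c0: "0 < c" unfolding c_def using q T d md by simp
  have "ln ((2::real) ^ m) \<le> ln (c ^ d)"
    using h2 c0 by (simp add: c_def)
  then have h3: "real m * ln 2 \<le> real d * ln c"
    by (simp add: ln_realpow)
  define A where "A = 2 * real q * real T / ln 2"
  define B where "B = real m * ln 2 / (2 * real d)"
  have A0: "0 < A" unfolding A_def using q T l2 by simp
  have B0: "0 < B" unfolding B_def using md d l2 by simp
  have cAB: "c = A * exp 1 * B"
    unfolding c_def A_def B_def using l2 d by (simp add: field_simps)
  have "ln c = ln A + 1 + ln B"
    using A0 B0 by (simp add: cAB ln_mult)
  also have "\<dots> \<le> ln A + 1 + (B - 1)"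
    using ln_le_minus_one[OF B0] by simp
  finally have "ln c \<le> ln A + B" by simp
  then have "real d * ln c \<le> real d * ln A + real d * B"
    using d by (simp add: mult_left_mono distrib_left[symmetric])
  also have "real d * B = real m * ln 2 / 2"
    unfolding B_def using d by simp
  finally have "real m * ln 2 \<le> real d * ln A + real m * ln 2 / 2" using h3 by linarith
  then have "real m * ln 2 \<le> 2 * real d * ln A" by linarith
  then have "real m \<le> 2 * real d * ln A / ln 2"
    using l2 by (simp add: field_simps)
  then show ?thesis unfolding log_def A_def by simp
qed

lemma vc_bound:
  fixes H :: "('x \<Rightarrow> bool) set"
  assumes h: "\<And>Z. finite Z \<Longrightarrow> Z \<subseteq> D \<Longrightarrow> shatters H Z \<Longrightarrow> real (card Z) \<le> B"
    and B: "0 \<le> B"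
  shows "VCdim_on D H \<noteq> \<infinity> \<and> real (the_enat (VCdim_on D H)) \<le> B"
proof -
  define M where "M = nat \<lfloor>B\<rfloor>"
  have cM: "card Z \<le> M" if "finite Z" "Z \<subseteq> D" "shatters H Z" for Z
  proof -
    have "real (card Z) \<le> B" using h[OF that] .
    then have "int (card Z) \<le> \<lfloor>B\<rfloor>" by (simp add: le_floor_iff)
    then show ?thesis unfolding M_def using B by (simp add: le_nat_iff)
  qed
  have "VCdim_on D H \<le> enat M"
    unfolding VCdim_on_def by (rule Sup_least) (use cM in auto)
  then obtain k where k: "VCdim_on D H = enat k" "k \<le> M"
    by (metis enat_ile enat_ord_simps(1))
  have "real k \<le> real M" using k(2) by simp
  also have "real M \<le> B" unfolding M_def using B by simp
  finally show ?thesis using k by simp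
qed

lemma Ndim_le:
  assumes "Ndim F = enat d" "finite S" "N_shatters F S"
  shows "card S \<le> d"
proof -
  have "enat (card S) \<le> Ndim F"
    unfolding Ndim_def by (rule Sup_upper) (use assms in auto)
  then show ?thesis using assms(1) by simp
qed

lemma VCdim_le:
  assumes "VCdim F = enat d" "finite S" "shatters F S"
  shows "card S \<le> d"
proof -
  have "enat (card S) \<le> VCdim F"
    unfolding VCdim_on_def by (rule Sup_upper) (use assms in auto)
  then show ?thesis using assms(1) by simp
qed

lemma N_shatters_bool:
  fixes H :: "('x \<Rightarrow> bool) set"
  assumes "N_shatters H S"
  shows "shatters H S"
  unfolding shatters_def
proof (intro allI impI)
  fix U assume U: "U \<subseteq> S"
  obtain h0 h1 where d: "\<forall>x\<in>S. h0 x \<noteq> h1 x"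
    and r: "\<forall>U\<subseteq>S. \<exists>h\<in>H. (\<forall>x\<in>U. h x = h0 x) \<and> (\<forall>x\<in>S - U. h x = h1 x)"
    using assms unfolding N_shatters_def by blast
  define U' where "U' = {x\<in>S. h0 x = (x \<in> U)}"
  have "U' \<subseteq> S" unfolding U'_def by auto
  then obtain h where h: "h \<in> H" "\<forall>x\<in>U'. h x = h0 x" "\<forall>x\<in>S - U'. h x = h1 x"
    using r by blast
  have "\<forall>x\<in>S. h x = (x \<in> U)"
  proof
    fix x assume x: "x \<in> S"
    show "h x = (x \<in> U)"
    proof (cases "x \<in> U'")
      case True then show ?thesis using h(2) unfolding U'_def by auto
    next
      case False
      then have "h x = h1 x" "h0 x \<noteq> (x \<in> U)" using h(3) x unfolding U'_def by auto
      then show ?thesis using d x by auto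
    qed
  qed
  then show "\<exists>h\<in>H. \<forall>x\<in>S. h x = (x \<in> U)" using h(1) by blast
qed

lemma d_le_3dL: "1 \<le> (L::real) \<Longrightarrow> real d \<le> 3 * real d * L"
proof -
  assume "1 \<le> L"
  then have "real d * 1 \<le> real d * (3 * L)" by (intro mult_left_mono) auto
  then show ?thesis by (simp add: algebra_simps)
qed

lemma twodL_le: "0 \<le> (L::real) \<Longrightarrow> 2 * real d * L \<le> 3 * real d * L"
proof -
  assume "0 \<le> L"
  then have "0 \<le> real d * L" by simp
  then show ?thesis by (simp add: mult.commute)
qed

lemma pow2_le1: "(2::nat) ^ m \<le> 1 \<Longrightarrow> m = 0"
proof (rule ccontr)
  assume a: "2 ^ m \<le> (1::nat)" "m \<noteq> 0"
  then have "(2::nat) ^ 1 \<le> 2 ^ m" by (intro power_increasing) auto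
  with a show False by simp
qed

lemma log2_ge1: "2 \<le> x \<Longrightarrow> 1 \<le> log 2 x"
  using log_le_cancel_iff[of 2 2 x] by simp

lemma part_binary:
  fixes T :: nat and F :: "(bool list \<Rightarrow> bool) set"
  assumes T: "T \<ge> 1" and VC: "VCdim F = enat d"
  shows "VCdim_on {z. T \<le> length z} (loss_class F T) \<noteq> \<infinity> \<and>
         real (the_enat (VCdim_on {z. T \<le> length z} (loss_class F T)))
           \<le> 3 * real d * log 2 (2 * real T / ln 2)"
proof (rule vc_bound)
  define P where "P = {(False, True)}"
  have Pd: "\<And>a b. (a,b)\<in>P \<Longrightarrow> a \<noteq> b" unfolding P_def by auto
  have Pt: "\<And>a b. a \<noteq> b \<Longrightarrow> (a,b)\<in>P \<or> (b,a)\<in>P" unfolding P_def by auto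
  have cP: "card P = 1" unfolding P_def by simp
  have hyp: "card S \<le> d" if "finite S" "N_shatters F S" for S
    using VCdim_le[OF VC that(1) N_shatters_bool[OF that(2)]] .
  have l2: "0 < ln (2::real)" "ln (2::real) < 1" using ln_2_less_1 by auto
  have "2 \<le> 2 * real T / ln 2" using T l2 by (simp add: field_simps)
  then have L: "1 \<le> log 2 (2 * real T / ln 2)" by (rule log2_ge1)
  show "0 \<le> 3 * real d * log 2 (2 * real T / ln 2)" using L by simp
  fix Z assume Z: "finite Z" "Z \<subseteq> {z. T \<le> length z}" "shatters (loss_class F T) Z"
  define m where "m = card Z"
  have h: "2 ^ m \<le> Phi 1 (m * T) d"
    using shatter_count[OF Pd Pt hyp Z] cP unfolding m_def by simp
  have "real m \<le> 3 * real d * log 2 (2 * real T / ln 2)"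
  proof (cases "m \<le> d")
    case True
    then have "real m \<le> real d" by simp
    also have "\<dots> \<le> 3 * real d * log 2 (2 * real T / ln 2)"
      using d_le_3dL[OF L] .
    finally show ?thesis .
  next
    case False
    show ?thesis
    proof (cases "d = 0")
      case True
      then have "(2::nat) ^ m \<le> 1" using h by (simp add: Phi_n0)
      then have "m = 0" by (rule pow2_le1)
      then show ?thesis using False by simp
    next
      case d0: False
      have "real m \<le> 2 * real d * log 2 (2 * real 1 * real T / ln 2)"
        using arith_main[OF h _ T] d0 False by simp
      also have "\<dots> \<le> 3 * real d * log 2 (2 * real T / ln 2)"
        using twodL_le[of "log 2 (2 * real T / ln 2)" d] L by simp
      finally show ?thesis .
    qed
  qed
  then show "real (card Z) \<le> 3 * real d * log 2 (2 * real T / ln 2)" unfolding m_def .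
qed

lemma ln72: "3 \<le> ln (72::real)"
proof -
  have "exp (3::real) = exp 1 ^ 3"
    using exp_of_nat_mult[of 3 1] by simp
  also have "\<dots> \<le> 3 ^ 3" by (rule power_mono[OF exp_le]) simp
  finally have "exp (3::real) \<le> 72" by simp
  then have "ln (exp (3::real)) \<le> ln 72" by (subst ln_le_cancel_iff) auto
  then show ?thesis by simp
qed

lemma key_ineq:
  fixes k q d T :: nat
  assumes k: "3 \<le> k" and q2: "2 * q \<le> k ^ 2" and q: "1 \<le> q" and T: "1 \<le> T" and d: "1 \<le> d"
  shows "2 * log 2 (2 * real q * real T / ln 2)
         \<le> 3 * log 2 (2 * real d * real k ^ 2 * real T / (exp 1 * ln 2))"
proof -
  have l2: "0 < ln (2::real)" "ln (2::real) < 1" using ln_2_less_1 by auto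
  define w where "w = real k ^ 2 * real T / ln 2"
  define a where "a = 2 * real q * real T / ln 2"
  define b where "b = 2 * real d * real k ^ 2 * real T / (exp 1 * ln 2)"
  have kr: "(9::real) \<le> real k ^ 2"
  proof -
    have "(3::real) ^ 2 \<le> real k ^ 2" by (rule power_mono) (use k in auto)
    then show ?thesis by simp
  qed
  have w9: "9 \<le> w"
  proof -
    have "real k ^ 2 * 1 \<le> real k ^ 2 * real T" by (intro mult_left_mono) (use T in auto)
    then have "9 \<le> real k ^ 2 * real T" using kr by linarith
    also have "\<dots> \<le> real k ^ 2 * real T / ln 2"
    proof -
      have "real k ^ 2 * real T * ln 2 \<le> real k ^ 2 * real T * 1"
        using l2 by (intro mult_left_mono) auto
      then show ?thesis using l2 by (simp add: le_divide_eq)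
    qed
    finally show ?thesis unfolding w_def .
  qed
  have a0: "0 < a" unfolding a_def using q T l2 by simp
  have aw: "a \<le> w"
  proof -
    have "real (2 * q) \<le> real (k ^ 2)" using q2 by (simp only: of_nat_le_iff)
    then have "2 * real q \<le> real k ^ 2" by simp
    then have "2 * real q * real T \<le> real k ^ 2 * real T" by (intro mult_right_mono) auto
    then show ?thesis unfolding a_def w_def using l2 by (intro divide_right_mono) auto
  qed
  have w0: "0 < w" using w9 by simp
  have e0: "0 < exp (1::real)" by simp
  have bw: "2 * w / exp 1 \<le> b"
  proof -
    have "b = real d * (2 * w / exp 1)" unfolding b_def w_def by (simp add: field_simps)
    moreover have "0 \<le> 2 * w / exp 1" using w0 by simp
    moreover have "1 * (2 * w / exp 1) \<le> real d * (2 * w / exp 1)"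
      using d w0 by (intro mult_right_mono) auto
    ultimately show ?thesis by simp
  qed
  have "ln (2 * w / exp 1) = ln 2 + ln w - 1"
    using w0 by (simp add: ln_div ln_mult)
  moreover have "ln (2 * w / exp 1) \<le> ln b"
  proof -
    have p: "0 < 2 * w / exp 1" using w0 by simp
    then have "0 < b" using bw by linarith
    then show ?thesis using bw p by (subst ln_le_cancel_iff) auto
  qed
  ultimately have lb: "ln 2 + ln w - 1 \<le> ln b" by simp
  have la: "ln a \<le> ln w" using a0 aw by simp
  have lw: "ln 9 \<le> ln w" using w9 by simp
  have "ln (72::real) = ln (9 * 2 ^ 3)" by simp
  also have "\<dots> = ln 9 + ln (2 ^ 3)" by (rule ln_mult_pos) auto
  also have "ln ((2::real) ^ 3) = 3 * ln 2" using ln_realpow[of "2::real" 3] by simp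
  finally have "3 \<le> ln 9 + 3 * ln (2::real)" using ln72 by simp
  then have "2 * ln a \<le> 3 * ln b" using la lw lb by linarith
  then have "2 * ln a / ln 2 \<le> 3 * ln b / ln 2" using l2 by (intro divide_right_mono) auto
  then show ?thesis unfolding log_def a_def[symmetric] b_def[symmetric] by simp
qed

lemma part_nonbinary:
  fixes T :: nat and F :: "('a::finite list \<Rightarrow> 'a) set"
  assumes T: "T \<ge> 1" and k2: "CARD('a) \<noteq> 2" and ND: "Ndim F = enat d"
  shows "VCdim_on {z. T \<le> length z} (loss_class F T) \<noteq> \<infinity> \<and>
         real (the_enat (VCdim_on {z. T \<le> length z} (loss_class F T)))
           \<le> 3 * real d * log 2 (2 * real d * real (CARD('a))^2 * real T / (exp 1 * ln 2))"
proof -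
  obtain enc :: "'a \<Rightarrow> nat" and n where "enc ` UNIV = {i. i < n}" "inj_on enc UNIV"
    using finite_imp_inj_to_nat_seg[of "UNIV :: 'a set"] by auto
  then have inj: "inj enc" by simp
  define P where "P = {(a,b). enc a < enc b}"
  have Pd: "\<And>a b. (a,b)\<in>P \<Longrightarrow> a \<noteq> b" unfolding P_def by auto
  have Pt: "\<And>a b. a \<noteq> b \<Longrightarrow> (a,b)\<in>P \<or> (b,a)\<in>P"
  proof -
    fix a b :: 'a assume "a \<noteq> b"
    then have "enc a \<noteq> enc b" using inj by (auto dest: injD)
    then show "(a,b)\<in>P \<or> (b,a)\<in>P" unfolding P_def by auto
  qed
  have finP: "finite P" by simp
  have cP2: "2 * card P \<le> CARD('a) ^ 2"
  proof -
    define P' where "P' = (\<lambda>(a,b). (b,a)) ` P"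
    have "inj_on (\<lambda>(a,b). (b,a)) P" unfolding inj_on_def by auto
    then have c': "card P' = card P" unfolding P'_def by (rule card_image)
    have dis: "P \<inter> P' = {}" unfolding P'_def P_def by auto
    have u: "card (P \<union> P') = card P + card P'"
      by (rule card_Un_disjoint) (use dis in \<open>auto simp: P'_def\<close>)
    have v: "card (P \<union> P') \<le> card (UNIV :: ('a \<times> 'a) set)"
      by (rule card_mono) auto
    have w: "card (UNIV :: ('a \<times> 'a) set) = CARD('a) * CARD('a)"
      using card_cartesian_product[of "UNIV :: 'a set" "UNIV :: 'a set"] by simp
    show ?thesis using u v w c' by (simp add: power2_eq_square)
  qed
  have hyp: "card S \<le> d" if "finite S" "N_shatters F S" for S
    using Ndim_le[OF ND that] .
  define B where "B = 3 * real d * log 2 (2 * real d * real (CARD('a))^2 * real T / (exp 1 * ln 2))"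
  show ?thesis
    unfolding B_def[symmetric]
  proof (cases "d = 0")
    case True
    then have B0: "B = 0" unfolding B_def by simp
    show "VCdim_on {z. T \<le> length z} (loss_class F T) \<noteq> \<infinity> \<and>
         real (the_enat (VCdim_on {z. T \<le> length z} (loss_class F T))) \<le> B"
    proof (rule vc_bound)
      show "0 \<le> B" using B0 by simp
      fix Z assume Z: "finite Z" "Z \<subseteq> {z. T \<le> length z}" "shatters (loss_class F T) Z"
      have "(2::nat) ^ card Z \<le> 1"
        using shatter_count[OF Pd Pt hyp Z] True by (simp add: Phi_n0)
      then have "card Z = 0" by (rule pow2_le1)
      then show "real (card Z) \<le> B" using B0 by simp
    qed
  next
    case False
    then have d1: "1 \<le> d" by simp
    obtain S where S: "finite S" "N_shatters F S" "S \<noteq> {}"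
    proof (rule ccontr)
      assume "\<not> thesis"
      then have a: "\<forall>S. finite S \<and> N_shatters F S \<longrightarrow> S = {}" using that by blast
      have "Ndim F \<le> enat 0"
        unfolding Ndim_def by (rule Sup_least) (use a in auto)
      then have "enat d \<le> enat 0" using ND by simp
      then show False using False by simp
    qed
    then obtain x where x: "x \<in> S" by auto
    obtain h0 h1 :: "'a list \<Rightarrow> 'a" where "\<forall>y\<in>S. h0 y \<noteq> h1 y" using S(2) unfolding N_shatters_def by blast
    then have hx: "h0 x \<noteq> h1 x" using x by auto
    have "card {h0 x, h1 x} \<le> CARD('a)" by (rule card_mono) auto
    then have "2 \<le> CARD('a)" using hx by simp
    then have k3: "3 \<le> CARD('a)" using k2 by simp
    have "(h0 x, h1 x) \<in> P \<or> (h1 x, h0 x) \<in> P" using Pt hx by blast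
    then have "P \<noteq> {}" by auto
    then have q1: "1 \<le> card P" using finP by (simp add: Suc_le_eq card_gt_0_iff)
    have l2: "0 < ln (2::real)" "ln (2::real) < 1" using ln_2_less_1 by auto
    have L: "1 \<le> log 2 (2 * real d * real (CARD('a))^2 * real T / (exp 1 * ln 2))"
    proof (rule log2_ge1)
      have ep: "exp 1 * ln 2 \<le> 3 * (1::real)"
        using exp_le l2 by (intro mult_mono) auto
      have "(9::real) \<le> real (CARD('a))^2"
      proof -
        have "(3::real) ^ 2 \<le> real (CARD('a)) ^ 2" by (rule power_mono) (use k3 in auto)
        then show ?thesis by simp
      qed
      moreover have "real (CARD('a))^2 * 1 \<le> real (CARD('a))^2 * real T"
        using T by (intro mult_left_mono) auto
      ultimately have f1: "9 \<le> real (CARD('a))^2 * real T" by linarith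
      have "1 * (2 * (real (CARD('a))^2 * real T)) \<le> real d * (2 * (real (CARD('a))^2 * real T))"
        using d1 f1 by (intro mult_right_mono) auto
      moreover have "2 * real d * real (CARD('a))^2 * real T = real d * (2 * (real (CARD('a))^2 * real T))"
        by (simp add: algebra_simps)
      ultimately have "18 \<le> 2 * real d * real (CARD('a))^2 * real T" using f1 by linarith
      moreover have pos: "0 < exp 1 * ln (2::real)" using l2 by simp
      ultimately show "2 \<le> 2 * real d * real (CARD('a))^2 * real T / (exp 1 * ln 2)"
        using ep by (subst pos_le_divide_eq[OF pos]) linarith
    qed
    show "VCdim_on {z. T \<le> length z} (loss_class F T) \<noteq> \<infinity> \<and>
         real (the_enat (VCdim_on {z. T \<le> length z} (loss_class F T))) \<le> B"
    proof (rule vc_bound)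
      show "0 \<le> B" unfolding B_def using L by simp
      fix Z assume Z: "finite Z" "Z \<subseteq> {z. T \<le> length z}" "shatters (loss_class F T) Z"
      define m where "m = card Z"
      have h: "2 ^ m \<le> Phi (card P) (m * T) d"
        using shatter_count[OF Pd Pt hyp Z] unfolding m_def .
      have "real m \<le> B"
      proof (cases "m \<le> d")
        case True
        then have "real m \<le> real d" by simp
        also have "\<dots> \<le> B" unfolding B_def using d_le_3dL[OF L] .
        finally show ?thesis .
      next
        case False
        have "real m \<le> 2 * real d * log 2 (2 * real (card P) * real T / ln 2)"
          using arith_main[OF h q1 T d1] False by simp
        also have "\<dots> = real d * (2 * log 2 (2 * real (card P) * real T / ln 2))" by simp
        also have "\<dots> \<le> real d * (3 * log 2 (2 * real d * real (CARD('a))^2 * real T / (exp 1 * ln 2)))"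
          by (intro mult_left_mono key_ineq[OF k3 cP2 q1 T d1]) simp
        also have "\<dots> = B" unfolding B_def by simp
        finally show ?thesis .
      qed
      then show "real (card Z) \<le> B" unfolding m_def .
    qed
  qed
qed

theorem theoremB5:
  fixes T :: nat
  assumes "T \<ge> 1"
  shows "(\<forall>(F :: (bool list \<Rightarrow> bool) set) d.
            VCdim F = enat d \<longrightarrow>
            VCdim_on {z. T \<le> length z} (loss_class F T) \<noteq> \<infinity> \<and>
            real (the_enat (VCdim_on {z. T \<le> length z} (loss_class F T)))
              \<le> 3 * real d * log 2 (2 * real T / ln 2))
       \<and> (CARD('a) \<noteq> 2 \<longrightarrow>
          (\<forall>(F :: ('a::finite list \<Rightarrow> 'a) set) d.
            Ndim F = enat d \<longrightarrow>
            VCdim_on {z. T \<le> length z} (loss_class F T) \<noteq> \<infinity> \<and>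
            real (the_enat (VCdim_on {z. T \<le> length z} (loss_class F T)))
              \<le> 3 * real d * log 2 (2 * real d * real (CARD('a))^2 * real T / (exp 1 * ln 2))))"
  using part_binary[OF assms] part_nonbinary[OF assms] by blast

end
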